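(* Let $\mathcal{C}$ be a class of instances and let $K\in\{\mathbb{B},\mathbb{N}\}$. Then $\mathcal{C}$ admits a left query algorithm over $K$ if and only if $\mathcal{C}$ admits a left query algorithm $(\mathcal{F},X)$ over $K$ in which every instance in $\mathcal{F}$ is connected.
   Context: A schema is a finite set of relation symbols, each with a positive arity. An instance $A$ over a schema $\sigma$ assigns to each $R\in\sigma$ of arity $r$ a finite $r$-ary relation $R^A$; its facts are the tuples in these relations, and $\mathrm{adom}(A)$ is the set of elements occurring in its facts. A homomorphism $h:A\to B$ is a map $h:\mathrm{adom}(A)\to\mathrm{adom}(B)$ such that $(a_1,\dots,a_r)\in R^A$ implies $(h(a_1),\dots,h(a_r))\in R^B$ for every $R\in\sigma$; we write $A\to B$ if one exists. A class of instances is a collection of instances over a fixed schema that is closed under isomorphism. $\mathbb{N}$ is the semiring of non-negative integers and $\mathbb{B}$ the Boolean semiring on $\{0,1\}$. $\hom_{\mathbb{N}}(A,B)$ is the number of homomorphisms from $A$ to $B$; $\hom_{\mathbb{B}}(A,B)=1$ if $A\to B$ and $0$ otherwise. For a finite set $\mathcal{F}=\{F_1,\dots,F_k\}$ of instances, $\hom_K(\mathcal{F},A)=(\hom_K(F_1,A),\dots,\hom_K(F_k,A))$ and $\hom_K(A,\mathcal{F})=(\hom_K(A,F_1),\dots,\hom_K(A,F_k))$. A left $k$-query algorithm over $K$ for $\mathcal{C}$ is a pair $(\mathcal{F},X)$ with $\mathcal{F}$ a set of $k$ instances and $X$ a set of $k$-tuples over $K$ (no effectiveness required) such that for every instance $D$: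 $D\in\mathcal{C}$ iff $\hom_K(\mathcal{F},D)\in X$. A right $k$-query algorithm is defined the same way using $\hom_K(D,\mathcal{F})$. $\mathcal{C}$ admits a left (right) query algorithm over $K$ if it has a left (right) $k$-query algorithm over $K$ for some $k>0$. The incidence multigraph of $A$ is the bipartite multigraph with parts $\mathrm{adom}(A)$ and $\{(R,t): R\in\sigma, t\in R^A\}$, with an edge $(a,(R,t))$ for each occurrence of $a$ as an entry of $t$. A path in $A$ is a sequence $a_0,\dots,a_n$ of elements such that there are $b_1,\dots,b_n$ with $a_0,b_1,a_1,\dots,b_n,a_n$ a path in the incidence multigraph (not traversing an edge twice in succession in opposite directions); $A$ is connected if any two elements of $\mathrm{adom}(A)$ are joined by a path. *)

theory Defs
  imports "HOL-Library.FuncSet"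
begin

type_synonym ('r, 'a) inst = "'r \<Rightarrow> 'a list set"

definition schema :: "'r set \<Rightarrow> ('r \<Rightarrow> nat) \<Rightarrow> bool" where
  "schema sig ar \<longleftrightarrow> finite sig \<and> (\<forall>R\<in>sig. ar R > 0)"

definition is_instance :: "'r set \<Rightarrow> ('r \<Rightarrow> nat) \<Rightarrow> ('r, 'a) inst \<Rightarrow> bool" where
  "is_instance sig ar A \<longleftrightarrow>
     (\<forall>R. R \<notin> sig \<longrightarrow> A R = {}) \<and>
     (\<forall>R. finite (A R)) \<and>
     (\<forall>R. \<forall>t\<in>A R. length t = ar R)"

definition adom :: "('r, 'a) inst \<Rightarrow> 'a set" where
  "adom A = (\<Union>R. \<Union>t\<in>A R. set t)"

definition homs :: "('r, 'a) inst \<Rightarrow> ('r, 'b) inst \<Rightarrow> ('a \<Rightarrow> 'b) set" where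
  "homs A B = {h. h \<in> adom A \<rightarrow>\<^sub>E adom B \<and> (\<forall>R. \<forall>t\<in>A R. map h t \<in> B R)}"

datatype semiring_K = KB | KN

definition hom_K :: "semiring_K \<Rightarrow> ('r, 'a) inst \<Rightarrow> ('r, 'b) inst \<Rightarrow> nat" where
  "hom_K K A B = (case K of
       KN \<Rightarrow> card (homs A B)
     | KB \<Rightarrow> (if homs A B \<noteq> {} then 1 else 0))"

definition isomorphic :: "('r, 'a) inst \<Rightarrow> ('r, 'b) inst \<Rightarrow> bool" where
  "isomorphic A B \<longleftrightarrow> (\<exists>h. bij_betw h (adom A) (adom B) \<and>
      (\<forall>R t. set t \<subseteq> adom A \<longrightarrow> (t \<in> A R \<longleftrightarrow> map h t \<in> B R)))"

definition is_class :: "'r set \<Rightarrow> ('r \<Rightarrow> nat) \<Rightarrow> ('r, 'a) inst set \<Rightarrow> bool" where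
  "is_class sig ar C \<longleftrightarrow>
     (\<forall>A\<in>C. is_instance sig ar A) \<and>
     (\<forall>A B. A \<in> C \<longrightarrow> is_instance sig ar B \<longrightarrow> isomorphic A B \<longrightarrow> B \<in> C)"

text \<open>Left k-query algorithm (F, X): F is a set of k instances, listed as a distinct
  list Fs of length k (fixing the order of coordinates), and X a set of k-tuples
  (lists of length k) over K (values in nat; for B only 0/1 occur).\<close>
definition left_query_alg ::
  "'r set \<Rightarrow> ('r \<Rightarrow> nat) \<Rightarrow> semiring_K \<Rightarrow> ('r, 'a) inst set \<Rightarrow> nat
     \<Rightarrow> ('r, 'a) inst list \<Rightarrow> nat list set \<Rightarrow> bool" where
  "left_query_alg sig ar K C k Fs X \<longleftrightarrow>
     length Fs = k \<and> distinct Fs \<and> (\<forall>F\<in>set Fs. is_instance sig ar F) \<and>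
     (\<forall>x\<in>X. length x = k) \<and>
     (K = KB \<longrightarrow> (\<forall>x\<in>X. set x \<subseteq> {0, 1})) \<and>
     (\<forall>D. is_instance sig ar D \<longrightarrow> (D \<in> C \<longleftrightarrow> map (\<lambda>F. hom_K K F D) Fs \<in> X))"

definition admits_left_query_alg ::
  "'r set \<Rightarrow> ('r \<Rightarrow> nat) \<Rightarrow> semiring_K \<Rightarrow> ('r, 'a) inst set \<Rightarrow> bool" where
  "admits_left_query_alg sig ar K C \<longleftrightarrow>
     (\<exists>k>0. \<exists>Fs X. left_query_alg sig ar K C k Fs X)"

text \<open>A path a_0,...,a_n is witnessed by steps (R_i, t_i, p_i, q_i), i = 1..n:
  the incidence path goes a_(i-1) -> (R_i,t_i) along the edge of occurrence p_i and
  (R_i,t_i) -> a_i along the edge of occurrence q_i.  Not traversing an edge twice in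
  succession in opposite directions means p_i \<noteq> q_i, and the exit edge of step i
  differs from the entry edge of step i+1.\<close>
definition is_path :: "('r, 'a) inst \<Rightarrow> 'a list \<Rightarrow> bool" where
  "is_path A xs \<longleftrightarrow> xs \<noteq> [] \<and>
     (\<exists>st :: ('r \<times> 'a list \<times> nat \<times> nat) list.
        length xs = Suc (length st) \<and>
        (\<forall>i<length st. case st ! i of (R, t, p, q) \<Rightarrow>
            t \<in> A R \<and> p < length t \<and> q < length t \<and> p \<noteq> q \<and>
            t ! p = xs ! i \<and> t ! q = xs ! Suc i) \<and>
        (\<forall>i. Suc i < length st \<longrightarrow>
            (case st ! i of (R, t, p, q) \<Rightarrow> case st ! Suc i of (R', t', p', q') \<Rightarrow>
               \<not> (R' = R \<and> t' = t \<and> p' = q))))"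

definition connected_inst :: "('r, 'a) inst \<Rightarrow> bool" where
  "connected_inst A \<longleftrightarrow>
     (\<forall>a\<in>adom A. \<forall>b\<in>adom A. \<exists>xs. is_path A xs \<and> hd xs = a \<and> last xs = b)"

end

theory Submission imports Defs begin

definition W :: "('r, 'a) inst \<Rightarrow> 'a list \<Rightarrow> ('r \<times> 'a list \<times> nat \<times> nat) list \<Rightarrow> bool" where
  "W A xs st \<longleftrightarrow>
        length xs = Suc (length st) \<and>
        (\<forall>i<length st. case st ! i of (R, t, p, q) \<Rightarrow>
            t \<in> A R \<and> p < length t \<and> q < length t \<and> p \<noteq> q \<and>
            t ! p = xs ! i \<and> t ! q = xs ! Suc i) \<and>
        (\<forall>i. Suc i < length st \<longrightarrow>
            (case st ! i of (R, t, p, q) \<Rightarrow> case st ! Suc i of (R', t', p', q') \<Rightarrow>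
               \<not> (R' = R \<and> t' = t \<and> p' = q)))"

lemma is_path_W: "is_path A xs \<longleftrightarrow> (\<exists>st. W A xs st)"
  unfolding is_path_def W_def by auto

lemma W_single: "W A [a] []" unfolding W_def by auto

lemma W_L3: assumes "W G (ys@[x]) (st0@[s])" shows "W G ys st0"
proof -
  have len: "length ys = Suc (length st0)" using assms unfolding W_def by simp
  show ?thesis unfolding W_def
  proof (intro conjI allI impI)
    show "length ys = Suc (length st0)" by (rule len)
  next
    fix i assume i: "i < length st0"
    have "case (st0@[s]) ! i of (R, t, p, q) \<Rightarrow>
            t \<in> G R \<and> p < length t \<and> q < length t \<and> p \<noteq> q \<and>
            t ! p = (ys@[x]) ! i \<and> t ! q = (ys@[x]) ! Suc i"
      using assms i unfolding W_def by auto
    then show "case st0 ! i of (R, t, p, q) \<Rightarrow>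
            t \<in> G R \<and> p < length t \<and> q < length t \<and> p \<noteq> q \<and>
            t ! p = ys ! i \<and> t ! q = ys ! Suc i"
      using i len by (simp add: nth_append)
  next
    fix i assume i: "Suc i < length st0"
    have "case (st0@[s]) ! i of (R, t, p, q) \<Rightarrow> case (st0@[s]) ! Suc i of (R', t', p', q') \<Rightarrow>
               \<not> (R' = R \<and> t' = t \<and> p' = q)"
      using assms i unfolding W_def by auto
    then show "case st0 ! i of (R, t, p, q) \<Rightarrow> case st0 ! Suc i of (R', t', p', q') \<Rightarrow>
               \<not> (R' = R \<and> t' = t \<and> p' = q)"
      using i by (simp add: nth_append)
  qed
qed

lemma W_L2: assumes "W G (ys@[x]) (st0@[(R,t,p0,q0)])" "q < length t" "p0 \<noteq> q"
  shows "W G (ys@[t!q]) (st0@[(R,t,p0,q)])"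
proof -
  have len: "length ys = Suc (length st0)" using assms unfolding W_def by simp
  show ?thesis unfolding W_def
  proof (intro conjI allI impI)
    show "length (ys@[t!q]) = Suc (length (st0@[(R,t,p0,q)]))" using len by simp
  next
    fix i assume i: "i < length (st0@[(R,t,p0,q)])"
    have H: "case (st0@[(R,t,p0,q0)]) ! i of (R, t, p, q) \<Rightarrow>
            t \<in> G R \<and> p < length t \<and> q < length t \<and> p \<noteq> q \<and>
            t ! p = (ys@[x]) ! i \<and> t ! q = (ys@[x]) ! Suc i"
      using assms(1) i unfolding W_def by auto
    show "case (st0@[(R,t,p0,q)]) ! i of (R1, t1, p1, q1) \<Rightarrow>
            t1 \<in> G R1 \<and> p1 < length t1 \<and> q1 < length t1 \<and> p1 \<noteq> q1 \<and>
            t1 ! p1 = (ys@[t!q]) ! i \<and> t1 ! q1 = (ys@[t!q]) ! Suc i"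
    proof (cases "i < length st0")
      case True
      then show ?thesis using len H by (simp add: nth_append)
    next
      case False
      then have ii: "i = length st0" using i by simp
      have "t ! p0 = (ys@[x]) ! i" "t \<in> G R" "p0 < length t"
        using H ii by (auto simp: nth_append)
      then show ?thesis using ii len assms(2,3) by (simp add: nth_append)
    qed
  next
    fix i assume i: "Suc i < length (st0@[(R,t,p0,q)])"
    have H2: "case (st0@[(R,t,p0,q0)]) ! i of (R1, t1, p1, q1) \<Rightarrow> case (st0@[(R,t,p0,q0)]) ! Suc i of (R', t', p', q') \<Rightarrow>
               \<not> (R' = R1 \<and> t' = t1 \<and> p' = q1)"
      using assms(1) i unfolding W_def by auto
    show "case (st0@[(R,t,p0,q)]) ! i of (R1, t1, p1, q1) \<Rightarrow> case (st0@[(R,t,p0,q)]) ! Suc i of (R', t', p', q') \<Rightarrow>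
               \<not> (R' = R1 \<and> t' = t1 \<and> p' = q1)"
    proof (cases "Suc i < length st0")
      case True
      then show ?thesis using H2 by (simp add: nth_append)
    next
      case False
      then have "Suc i = length st0" using i by simp
      then show ?thesis using H2 by (simp add: nth_append)
    qed
  qed
qed

lemma W_L1: assumes "W G xs st" "t \<in> G R" "p < length t" "q < length t" "p \<noteq> q" "t!p = last xs"
  "\<forall>st0 R0 t0 p0 q0. st = st0@[(R0,t0,p0,q0)] \<longrightarrow> \<not>(R = R0 \<and> t = t0 \<and> p = q0)"
  shows "W G (xs@[t!q]) (st@[(R,t,p,q)])"
proof -
  have len: "length xs = Suc (length st)" using assms unfolding W_def by simp
  have lastx: "last xs = xs ! length st" using len
    by (metis last_conv_nth length_greater_0_conv diff_Suc_1 zero_less_Suc)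
  show ?thesis unfolding W_def
  proof (intro conjI allI impI)
    show "length (xs@[t!q]) = Suc (length (st@[(R,t,p,q)]))" using len by simp
  next
    fix i assume i: "i < length (st@[(R,t,p,q)])"
    show "case (st@[(R,t,p,q)]) ! i of (R1, t1, p1, q1) \<Rightarrow>
            t1 \<in> G R1 \<and> p1 < length t1 \<and> q1 < length t1 \<and> p1 \<noteq> q1 \<and>
            t1 ! p1 = (xs@[t!q]) ! i \<and> t1 ! q1 = (xs@[t!q]) ! Suc i"
    proof (cases "i < length st")
      case True
      then have "case st ! i of (R, t, p, q) \<Rightarrow>
            t \<in> G R \<and> p < length t \<and> q < length t \<and> p \<noteq> q \<and>
            t ! p = xs ! i \<and> t ! q = xs ! Suc i"
        using assms(1) unfolding W_def by auto
      then show ?thesis using True len by (simp add: nth_append)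
    next
      case False
      then have "i = length st" using i by simp
      then show ?thesis using assms(2-6) len lastx by (simp add: nth_append)
    qed
  next
    fix i assume i: "Suc i < length (st@[(R,t,p,q)])"
    show "case (st@[(R,t,p,q)]) ! i of (R1, t1, p1, q1) \<Rightarrow> case (st@[(R,t,p,q)]) ! Suc i of (R', t', p', q') \<Rightarrow>
               \<not> (R' = R1 \<and> t' = t1 \<and> p' = q1)"
    proof (cases "Suc i < length st")
      case True
      then have "case st ! i of (R, t, p, q) \<Rightarrow> case st ! Suc i of (R', t', p', q') \<Rightarrow>
               \<not> (R' = R \<and> t' = t \<and> p' = q)"
        using assms(1) unfolding W_def by auto
      then show ?thesis using True by (simp add: nth_append)
    next
      case False
      then have si: "Suc i = length st" using i by simp
      then have "st \<noteq> []" by auto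
      then obtain st1 s1 where st1: "st = st1 @ [s1]" by (metis rev_exhaust)
      obtain R0 t0 p0 q0 where s1: "s1 = (R0,t0,p0,q0)" by (metis prod_cases4)
      have "i = length st1" using si st1 by simp
      then have "st = st1 @ [(R0,t0,p0,q0)]" "st ! i = (R0,t0,p0,q0)" using st1 s1 by auto
      then show ?thesis using assms(7) si by (auto simp add: nth_append)
    qed
  qed
qed

definition rel :: "('r, 'a) inst \<Rightarrow> ('a \<times> 'a) set" where
  "rel F = {(a,b). \<exists>R. \<exists>t\<in>F R. a \<in> set t \<and> b \<in> set t}"

lemma W_info: assumes "W G (ys@[x]) (st0@[(R0,t0,p0,q0)])"
  shows "length ys = Suc (length st0)" "t0 ! p0 = ys ! length st0" "t0 ! q0 = x"
proof -
  show l: "length ys = Suc (length st0)" using assms unfolding W_def by simp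
  have "case (st0@[(R0,t0,p0,q0)]) ! length st0 of (R, t, p, q) \<Rightarrow>
            t \<in> G R \<and> p < length t \<and> q < length t \<and> p \<noteq> q \<and>
            t ! p = (ys@[x]) ! length st0 \<and> t ! q = (ys@[x]) ! Suc (length st0)"
    using assms unfolding W_def by auto
  then show "t0 ! p0 = ys ! length st0" "t0 ! q0 = x" using l by (auto simp: nth_append)
qed

lemma path_exists: "(a,b) \<in> (rel G)\<^sup>* \<Longrightarrow> \<exists>xs st. W G xs st \<and> hd xs = a \<and> last xs = b"
proof (induction rule: rtrancl_induct)
  case base
  show ?case using W_single by fastforce
next
  case (step y z)
  obtain xs st where W: "W G xs st" and h: "hd xs = a" and l: "last xs = y" using step.IH by blast
  obtain R t where t: "t \<in> G R" "y \<in> set t" "z \<in> set t" using step.hyps(2) unfolding rel_def by auto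
  obtain p where p: "p < length t" "t ! p = y" using t by (metis in_set_conv_nth)
  obtain q where q: "q < length t" "t ! q = z" using t by (metis in_set_conv_nth)
  show ?case
  proof (cases "p = q")
    case True
    then show ?thesis using W h l p q by auto
  next
    case pq: False
    have lenxs: "length xs = Suc (length st)" using W unfolding W_def by simp
    have hd_app: "hd (xs @ [c]) = hd xs" for c using lenxs by (cases xs) auto
    show ?thesis
    proof (cases "\<forall>st0 R0 t0 p0 q0. st = st0@[(R0,t0,p0,q0)] \<longrightarrow> \<not>(R = R0 \<and> t = t0 \<and> p = q0)")
      case True
      then have "W G (xs@[t!q]) (st@[(R,t,p,q)])" using W_L1[OF W t(1) p(1) q(1) pq] p l by auto
      then show ?thesis using h q hd_app by fastforce
    next
      case False
      then obtain st0 p0 q0 where st: "st = st0@[(R,t,p0,q0)]" and pq0: "p = q0" by auto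
      obtain ys x where xs: "xs = ys @ [x]" using lenxs by (metis rev_exhaust Zero_not_Suc list.size(3))
      have W2: "W G (ys@[x]) (st0@[(R,t,p0,q0)])" using W st xs by simp
      note info = W_info[OF W2]
      have ysne: "ys \<noteq> []" using info(1) by auto
      have hdys: "hd ys = a" using h xs ysne by simp
      have lastys: "last ys = ys ! length st0" using info(1)
        by (metis last_conv_nth length_greater_0_conv diff_Suc_1 zero_less_Suc)
      show ?thesis
      proof (cases "p0 = q")
        case False
        have "W G (ys@[t!q]) (st0@[(R,t,p0,q)])" using W_L2[OF W2 q(1) False] .
        then show ?thesis using hdys ysne q by (metis hd_append2 last_snoc)
      next
        case True
        have "W G ys st0" using W_L3[OF W2] .
        moreover have "last ys = z" using lastys info(2) True q by simp
        ultimately show ?thesis using hdys by blast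
      qed
    qed
  qed
qed

definition restr :: "('r, 'a) inst \<Rightarrow> 'a set \<Rightarrow> ('r, 'a) inst" where
  "restr F U = (\<lambda>R. {t \<in> F R. set t \<subseteq> U})"

lemma in_adom: "t \<in> F R \<Longrightarrow> set t \<subseteq> adom F"
  unfolding adom_def by auto

lemma adom_iff: "x \<in> adom F \<longleftrightarrow> (\<exists>R. \<exists>t\<in>F R. x \<in> set t)"
  unfolding adom_def by auto

lemma adom_restr_sub: "adom (restr F U) \<subseteq> U"
  unfolding adom_def restr_def by auto

lemma split_hom:
  fixes G :: "('r, 'a) inst" and D :: "('r, 'b) inst"
  assumes disj: "U \<inter> V = {}" and tup: "\<forall>R. \<forall>t\<in>G R. set t \<subseteq> U \<or> set t \<subseteq> V"
  shows "hom_K K G D = hom_K K (restr G U) D * hom_K K (restr G V) D"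
proof -
  define A1 where "A1 = adom (restr G U)"
  define A2 where "A2 = adom (restr G V)"
  have A1U: "A1 \<subseteq> U" and A2V: "A2 \<subseteq> V" unfolding A1_def A2_def by (rule adom_restr_sub)+
  have sub: "adom (restr G W) \<subseteq> adom G" for W unfolding adom_def restr_def by auto
  have A: "adom G = A1 \<union> A2"
  proof
    show "adom G \<subseteq> A1 \<union> A2"
    proof
      fix x assume "x \<in> adom G"
      then obtain R t where t: "t \<in> G R" "x \<in> set t" unfolding adom_iff by blast
      then have "t \<in> restr G U R \<or> t \<in> restr G V R" using tup unfolding restr_def by auto
      then show "x \<in> A1 \<union> A2" unfolding A1_def A2_def
        using t(2) in_adom[of t "restr G U" R] in_adom[of t "restr G V" R] by blast
    qed
  next
    show "A1 \<union> A2 \<subseteq> adom G" unfolding A1_def A2_def using sub by blast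
  qed
  have tU: "set t \<subseteq> A1" if "t \<in> restr G U R" for t R unfolding A1_def using in_adom[of t "restr G U" R] that .
  have tV: "set t \<subseteq> A2" if "t \<in> restr G V R" for t R unfolding A2_def using in_adom[of t "restr G V" R] that .
  define f :: "('a \<Rightarrow> 'b) \<Rightarrow> ('a \<Rightarrow> 'b) \<times> ('a \<Rightarrow> 'b)" where "f h = (restrict h A1, restrict h A2)" for h
  define g :: "('a \<Rightarrow> 'b) \<times> ('a \<Rightarrow> 'b) \<Rightarrow> 'a \<Rightarrow> 'b" where "g = (\<lambda>(h1,h2) x. if x \<in> A1 then h1 x else h2 x)"
  have bij: "bij_betw f (homs G D) (homs (restr G U) D \<times> homs (restr G V) D)"
  proof (rule bij_betw_byWitness[where f'=g])
    show "\<forall>h\<in>homs G D. g (f h) = h"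
    proof
      fix h assume h: "h \<in> homs G D"
      then have "h \<in> A1 \<union> A2 \<rightarrow>\<^sub>E adom D" unfolding homs_def A by blast
      then have hP: "h \<in> A1 \<union> A2 \<rightarrow>\<^sub>E adom D" .
      show "g (f h) = h"
      proof (rule ext)
        fix x show "g (f h) x = h x"
          using PiE_arb[OF hP, of x] by (simp add: f_def g_def)
      qed
    qed
  next
    show "\<forall>a'\<in>homs (restr G U) D \<times> homs (restr G V) D. f (g a') = a'"
    proof
      fix a' assume a': "a' \<in> homs (restr G U) D \<times> homs (restr G V) D"
      obtain h1 h2 where a: "a' = (h1,h2)" by fastforce
      have h1P: "h1 \<in> A1 \<rightarrow>\<^sub>E adom D" and h2P: "h2 \<in> A2 \<rightarrow>\<^sub>E adom D"
        using a' a unfolding homs_def A1_def A2_def by auto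
      have dj: "A1 \<inter> A2 = {}" using A1U A2V disj by blast
      have e1: "restrict (g (h1,h2)) A1 = h1"
      proof (rule ext)
        fix x show "restrict (g (h1,h2)) A1 x = h1 x"
          using PiE_arb[OF h1P, of x] by (simp add: g_def)
      qed
      have e2: "restrict (g (h1,h2)) A2 = h2"
      proof (rule ext)
        fix x show "restrict (g (h1,h2)) A2 x = h2 x"
          using PiE_arb[OF h2P, of x] dj by (auto simp add: g_def)
      qed
      show "f (g a') = a'" unfolding a f_def using e1 e2 by simp
    qed
  next
    show "f ` homs G D \<subseteq> homs (restr G U) D \<times> homs (restr G V) D"
    proof
      fix y assume "y \<in> f ` homs G D"
      then obtain h where h: "h \<in> homs G D" and y: "y = f h" by blast
      have hP: "h \<in> A1 \<union> A2 \<rightarrow>\<^sub>E adom D" and hT: "\<forall>R. \<forall>t\<in>G R. map h t \<in> D R"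
        using h unfolding homs_def A by auto
      have "restrict h A1 \<in> homs (restr G U) D"
        unfolding homs_def
      proof (intro CollectI conjI allI ballI)
        show "restrict h A1 \<in> adom (restr G U) \<rightarrow>\<^sub>E adom D" using hP unfolding A1_def by auto
      next
        fix R t assume t: "t \<in> restr G U R"
        have "map (restrict h A1) t = map h t" using tU[OF t] by (auto intro: map_cong)
        moreover have "map h t \<in> D R" using hT t unfolding restr_def by auto
        ultimately show "map (restrict h A1) t \<in> D R" by metis
      qed
      moreover have "restrict h A2 \<in> homs (restr G V) D"
        unfolding homs_def
      proof (intro CollectI conjI allI ballI)
        show "restrict h A2 \<in> adom (restr G V) \<rightarrow>\<^sub>E adom D" using hP unfolding A2_def by auto
      next
        fix R t assume t: "t \<in> restr G V R"
        have "map (restrict h A2) t = map h t" using tV[OF t] by (auto intro: map_cong)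
        moreover have "map h t \<in> D R" using hT t unfolding restr_def by auto
        ultimately show "map (restrict h A2) t \<in> D R" by metis
      qed
      ultimately show "y \<in> homs (restr G U) D \<times> homs (restr G V) D" unfolding y f_def by simp
    qed
  next
    show "g ` (homs (restr G U) D \<times> homs (restr G V) D) \<subseteq> homs G D"
    proof
      fix y assume "y \<in> g ` (homs (restr G U) D \<times> homs (restr G V) D)"
      then obtain h1 h2 where h1: "h1 \<in> homs (restr G U) D" and h2: "h2 \<in> homs (restr G V) D"
        and y: "y = g (h1,h2)" by blast
      have h1P: "h1 \<in> A1 \<rightarrow>\<^sub>E adom D" and h1T: "\<forall>R. \<forall>t\<in>restr G U R. map h1 t \<in> D R"
        using h1 unfolding homs_def A1_def by auto
      have h2P: "h2 \<in> A2 \<rightarrow>\<^sub>E adom D" and h2T: "\<forall>R. \<forall>t\<in>restr G V R. map h2 t \<in> D R"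
        using h2 unfolding homs_def A2_def by auto
      have dj: "A1 \<inter> A2 = {}" using A1U A2V disj by blast
      show "y \<in> homs G D" unfolding homs_def A
      proof (intro CollectI conjI allI ballI)
        show "y \<in> A1 \<union> A2 \<rightarrow>\<^sub>E adom D"
        proof (rule PiE_I)
          fix x assume "x \<in> A1 \<union> A2"
          then show "y x \<in> adom D" unfolding y g_def using h1P h2P by auto
        next
          fix x assume "x \<notin> A1 \<union> A2"
          then show "y x = undefined" unfolding y g_def using PiE_arb[OF h2P, of x] by auto
        qed
      next
        fix R t assume t: "t \<in> G R"
        show "map y t \<in> D R"
        proof (cases "set t \<subseteq> U")
          case True
          then have tt: "t \<in> restr G U R" using t unfolding restr_def by auto
          have "map y t = map h1 t" using tU[OF tt] unfolding y g_def by (auto intro: map_cong)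
          then show ?thesis using h1T tt by metis
        next
          case False
          then have tt: "t \<in> restr G V R" using t tup unfolding restr_def by auto
          have "map y t = map h2 t" using tV[OF tt] dj unfolding y g_def by (auto intro: map_cong)
          then show ?thesis using h2T tt by metis
        qed
      qed
    qed
  qed
  have card: "card (homs G D) = card (homs (restr G U) D) * card (homs (restr G V) D)"
    using bij_betw_same_card[OF bij] by (simp add: card_cartesian_product)
  have ne: "homs G D \<noteq> {} \<longleftrightarrow> homs (restr G U) D \<noteq> {} \<and> homs (restr G V) D \<noteq> {}"
  proof -
    have "f ` homs G D = homs (restr G U) D \<times> homs (restr G V) D" using bij by (simp add: bij_betw_def)
    then have "homs G D \<noteq> {} \<longleftrightarrow> homs (restr G U) D \<times> homs (restr G V) D \<noteq> {}"
      by (metis image_is_empty)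
    then show ?thesis by blast
  qed
  show ?thesis unfolding hom_K_def using card ne by (cases K) auto
qed

definition comps :: "('r, 'a) inst \<Rightarrow> 'a set set" where
  "comps F = adom F // (rel F)\<^sup>+"

lemma no_empty: "schema sig ar \<Longrightarrow> is_instance sig ar F \<Longrightarrow> t \<in> F R \<Longrightarrow> t \<noteq> []"
proof -
  assume a: "schema sig ar" "is_instance sig ar F" "t \<in> F R"
  then have "R \<in> sig" unfolding is_instance_def by auto
  then have "ar R > 0" using a(1) unfolding schema_def by auto
  moreover have "length t = ar R" using a(2,3) unfolding is_instance_def by auto
  ultimately show "t \<noteq> []" by auto
qed

lemma finite_adom: assumes "schema sig ar" "is_instance sig ar F" shows "finite (adom F)"
proof -
  have "adom F \<subseteq> (\<Union>R\<in>sig. \<Union>t\<in>F R. set t)"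
    using assms unfolding adom_def is_instance_def by auto
  moreover have "finite (\<Union>R\<in>sig. \<Union>t\<in>F R. set t)"
    using assms unfolding schema_def is_instance_def by auto
  ultimately show ?thesis by (rule finite_subset)
qed

lemma rel_sub: "rel F \<subseteq> adom F \<times> adom F"
  unfolding rel_def adom_def by auto

lemma equiv_cl: "equiv (adom F) ((rel F)\<^sup>+)"
proof -
  have "(rel F)\<^sup>+ \<subseteq> adom F \<times> adom F" using rel_sub by (rule trancl_subset_Sigma)
  moreover have "(x,x) \<in> (rel F)\<^sup>+" if "x \<in> adom F" for x
    using that unfolding adom_iff rel_def by blast
  moreover have "sym (rel F)" unfolding rel_def sym_def by blast
  ultimately show ?thesis unfolding equiv_def refl_on_def
    using sym_trancl[of "rel F"] trans_trancl[of "rel F"] by blast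
qed

lemma tuple_in_comp: assumes "S \<in> comps F" "x \<in> S" "t \<in> F R" "x \<in> set t"
  shows "set t \<subseteq> S"
proof -
  obtain a where a: "a \<in> adom F" "S = (rel F)\<^sup>+ `` {a}" using assms(1) unfolding comps_def
    by (auto elim: quotientE)
  have ax: "(a,x) \<in> (rel F)\<^sup>+" using a assms(2) by auto
  show ?thesis
  proof
    fix y assume "y \<in> set t"
    then have "(x,y) \<in> rel F" using assms(3,4) unfolding rel_def by blast
    then have "(a,y) \<in> (rel F)\<^sup>+" by (rule trancl_into_trancl[OF ax])
    then show "y \<in> S" using a by auto
  qed
qed

lemma hom_empty: "hom_K K (\<lambda>R. {} :: 'a list set) (D :: ('r, 'b) inst) = 1"
proof -
  have "adom (\<lambda>R. {} :: 'a list set) = {}" unfolding adom_def by simp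
  have "homs (\<lambda>R. {} :: 'a list set) D = {\<lambda>x. undefined}" unfolding homs_def
    by (simp add: adom_def PiE_empty_domain)
  then show ?thesis unfolding hom_K_def by (cases K) auto
qed

lemma restr_restr: "restr (restr F Y) U = restr F (Y \<inter> U)"
  unfolding restr_def by auto

lemma prod_comps:
  assumes sch: "schema sig ar" and inst: "is_instance sig ar F"
    and fin: "finite SS" and sub: "SS \<subseteq> comps F"
  shows "hom_K K (restr F (\<Union>SS)) D = (\<Prod>S\<in>SS. hom_K K (restr F S) D)"
  using fin sub
proof (induction SS rule: finite_induct)
  case empty
  have "restr F {} = (\<lambda>R. {})" unfolding restr_def using no_empty[OF sch inst] by auto
  then show ?case using hom_empty by simp
next
  case (insert S SS)
  have S: "S \<in> comps F" and SS: "SS \<subseteq> comps F" using insert.prems by auto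
  have eq: "equiv (adom F) ((rel F)\<^sup>+)" by (rule equiv_cl)
  have disj: "S \<inter> \<Union>SS = {}"
  proof -
    have "S \<inter> T = {}" if "T \<in> SS" for T
      using quotient_disj[OF eq, of S T] S SS that insert.hyps(2) unfolding comps_def by auto
    then show ?thesis by blast
  qed
  have tup: "\<forall>R. \<forall>t\<in>restr F (S \<union> \<Union>SS) R. set t \<subseteq> S \<or> set t \<subseteq> \<Union>SS"
  proof (intro allI ballI)
    fix R t assume t: "t \<in> restr F (S \<union> \<Union>SS) R"
    then have tF: "t \<in> F R" and ts: "set t \<subseteq> S \<union> \<Union>SS" unfolding restr_def by auto
    obtain x where x: "x \<in> set t" using no_empty[OF sch inst tF] by (cases t) auto
    show "set t \<subseteq> S \<or> set t \<subseteq> \<Union>SS"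
    proof (cases "x \<in> S")
      case True
      then show ?thesis using tuple_in_comp[OF S True tF x] by blast
    next
      case False
      then obtain T where T: "T \<in> SS" "x \<in> T" using x ts by blast
      then have "set t \<subseteq> T" using tuple_in_comp[of T F x t R] T(2) tF x SS T(1) by blast
      then show ?thesis using T by blast
    qed
  qed
  have "hom_K K (restr F (S \<union> \<Union>SS)) D =
        hom_K K (restr (restr F (S \<union> \<Union>SS)) S) D * hom_K K (restr (restr F (S \<union> \<Union>SS)) (\<Union>SS)) D"
    by (rule split_hom[OF disj tup])
  also have "\<dots> = hom_K K (restr F S) D * hom_K K (restr F (\<Union>SS)) D"
    unfolding restr_restr by (simp add: Int_absorb2 Int_absorb1)
  finally show ?case using insert.IH SS insert.hyps by simp
qed

lemma hom_decomp:
  assumes sch: "schema sig ar" and inst: "is_instance sig ar F"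
  shows "hom_K K F D = (\<Prod>S\<in>comps F. hom_K K (restr F S) D)"
proof -
  have fin: "finite (comps F)" unfolding comps_def
    by (rule finite_quotient[OF finite_adom[OF sch inst] trancl_subset_Sigma[OF rel_sub]])
  have U: "\<Union>(comps F) = adom F" unfolding comps_def using Union_quotient[OF equiv_cl] .
  have "restr F (adom F) = F"
  proof (rule ext)
    fix R show "restr F (adom F) R = F R" unfolding restr_def using in_adom[of _ F R] by blast
  qed
  then show ?thesis using prod_comps[OF sch inst fin subset_refl, of K D] U by simp
qed

lemma conn_comp: assumes S: "S \<in> comps F" shows "connected_inst (restr F S)"
  unfolding connected_inst_def
proof (intro ballI)
  fix a b assume a: "a \<in> adom (restr F S)" and b: "b \<in> adom (restr F S)"
  have aS: "a \<in> S" using a adom_restr_sub[of F S] by blast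
  have bS: "b \<in> S" using b adom_restr_sub[of F S] by blast
  have Sq: "S \<in> adom F // (rel F)\<^sup>+" using S unfolding comps_def .
  have ab: "(a,b) \<in> (rel F)\<^sup>+"
    using quotient_eq_iff[OF equiv_cl Sq Sq aS bS] by simp
  have "(a,b) \<in> (rel (restr F S))\<^sup>+ \<and> b \<in> S"
    using ab
  proof (induction rule: trancl_induct)
    case (base y)
    then obtain R t where t: "t \<in> F R" "a \<in> set t" "y \<in> set t" unfolding rel_def by blast
    have ts: "set t \<subseteq> S" by (rule tuple_in_comp[OF S aS t(1) t(2)])
    then have "t \<in> restr F S R" using t unfolding restr_def by auto
    then have "(a,y) \<in> rel (restr F S)" using t unfolding rel_def by blast
    then show ?case using ts t by auto
  next
    case (step y z)
    then obtain R t where t: "t \<in> F R" "y \<in> set t" "z \<in> set t" unfolding rel_def by blast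
    have yS: "y \<in> S" using step.IH by blast
    have ts: "set t \<subseteq> S" by (rule tuple_in_comp[OF S yS t(1) t(2)])
    then have "t \<in> restr F S R" using t unfolding restr_def by auto
    then have yz: "(y,z) \<in> rel (restr F S)" using t unfolding rel_def by blast
    have "(a,z) \<in> (rel (restr F S))\<^sup>+" using step.IH yz by (blast intro: trancl_into_trancl)
    moreover have "z \<in> S" using ts t(3) by blast
    ultimately show ?case by blast
  qed
  then have "(a,b) \<in> (rel (restr F S))\<^sup>*" by (blast intro: trancl_into_rtrancl)
  then obtain xs st where "W (restr F S) xs st" "hd xs = a" "last xs = b"
    using path_exists[of a b "restr F S"] by blast
  then show "\<exists>xs. is_path (restr F S) xs \<and> hd xs = a \<and> last xs = b"
    unfolding is_path_W by blast
qed

lemma restr_inst: "is_instance sig ar F \<Longrightarrow> is_instance sig ar (restr F U)"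
  unfolding is_instance_def restr_def by auto

lemma fin_comps: "schema sig ar \<Longrightarrow> is_instance sig ar F \<Longrightarrow> finite (comps F)"
  unfolding comps_def
  by (rule finite_quotient[OF finite_adom trancl_subset_Sigma[OF rel_sub]])

definition clist :: "('r, 'a) inst \<Rightarrow> 'a set list" where
  "clist F = (SOME L. set L = comps F \<and> distinct L)"

definition cinst :: "('r, 'a) inst \<Rightarrow> ('r, 'a) inst list" where
  "cinst F = map (restr F) (clist F)"

lemma clist: "schema sig ar \<Longrightarrow> is_instance sig ar F \<Longrightarrow> set (clist F) = comps F \<and> distinct (clist F)"
  unfolding clist_def using finite_distinct_list[OF fin_comps] by (rule someI_ex)

lemma hom_cinst: assumes "schema sig ar" "is_instance sig ar F"
  shows "hom_K K F D = prod_list (map (\<lambda>G. hom_K K G D) (cinst F))"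
proof -
  have c: "set (clist F) = comps F" "distinct (clist F)" using clist[OF assms] by auto
  have "hom_K K F D = (\<Prod>S\<in>comps F. hom_K K (restr F S) D)" by (rule hom_decomp[OF assms])
  also have "\<dots> = prod_list (map (\<lambda>S. hom_K K (restr F S) D) (clist F))"
    using prod.distinct_set_conv_list[OF c(2), of "\<lambda>S. hom_K K (restr F S) D"] c(1) by simp
  finally show ?thesis unfolding cinst_def by (simp add: comp_def)
qed

theorem mainTheorem1:
  fixes sig :: "'r set" and ar :: "'r \<Rightarrow> nat" and K :: semiring_K
    and C :: "('r, 'a) inst set"
  assumes "schema sig ar"
    and "is_class sig ar C"
  shows "admits_left_query_alg sig ar K C \<longleftrightarrow>
         (\<exists>k>0. \<exists>Fs X. left_query_alg sig ar K C k Fs X \<and>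
                        (\<forall>F\<in>set Fs. connected_inst F))"
proof
  assume "\<exists>k>0. \<exists>Fs X. left_query_alg sig ar K C k Fs X \<and> (\<forall>F\<in>set Fs. connected_inst F)"
  then show "admits_left_query_alg sig ar K C" unfolding admits_left_query_alg_def by blast
next
  assume "admits_left_query_alg sig ar K C"
  then obtain k Fs X where "k > 0" and alg: "left_query_alg sig ar K C k Fs X"
    unfolding admits_left_query_alg_def by blast
  have FsI: "\<forall>F\<in>set Fs. is_instance sig ar F" and FsC: "\<forall>D. is_instance sig ar D \<longrightarrow> (D \<in> C \<longleftrightarrow> map (\<lambda>F. hom_K K F D) Fs \<in> X)"
    using alg unfolding left_query_alg_def by auto
  define E :: "('r, 'a) inst" where "E = (\<lambda>R. {})"
  define Fs' where "Fs' = remdups (E # concat (map cinst Fs))"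
  define k' where "k' = length Fs'"
  define look where "look y G = the (map_of (zip Fs' y) G)" for y :: "nat list" and G
  define X' where "X' = {y. length y = k' \<and> (K = KB \<longrightarrow> set y \<subseteq> {0,1}) \<and>
      map (\<lambda>F. prod_list (map (look y) (cinst F))) Fs \<in> X}"
  have setFs': "set Fs' = insert E (\<Union>F\<in>set Fs. set (cinst F))" unfolding Fs'_def by auto
  have dist': "distinct Fs'" unfolding Fs'_def by simp
  have k'pos: "k' > 0" unfolding k'_def using setFs' by (metis empty_iff insertI1 length_greater_0_conv set_empty)
  have inst': "\<forall>G\<in>set Fs'. is_instance sig ar G"
  proof
    fix G assume "G \<in> set Fs'"
    then consider "G = E" | F where "F \<in> set Fs" "G \<in> set (cinst F)" using setFs' by blast
    then show "is_instance sig ar G"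
    proof cases
      case 1 then show ?thesis unfolding E_def is_instance_def by simp
    next
      case 2
      then have "is_instance sig ar F" using FsI by blast
      then show ?thesis using 2(2) restr_inst[of sig ar F] unfolding cinst_def by auto
    qed
  qed
  have conn': "\<forall>G\<in>set Fs'. connected_inst G"
  proof
    fix G assume "G \<in> set Fs'"
    then consider "G = E" | F where "F \<in> set Fs" "G \<in> set (cinst F)" using setFs' by blast
    then show "connected_inst G"
    proof cases
      case 1
      have "adom E = {}" unfolding E_def adom_def by simp
      then show ?thesis unfolding 1 connected_inst_def by simp
    next
      case 2
      then obtain S where "S \<in> set (clist F)" "G = restr F S" unfolding cinst_def by auto
      moreover have "set (clist F) = comps F" using clist[OF assms(1)] FsI 2(1) by blast
      ultimately show ?thesis using conn_comp by auto
    qed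
  qed
  have key: "D \<in> C \<longleftrightarrow> map (\<lambda>G. hom_K K G D) Fs' \<in> X'" if D: "is_instance sig ar D" for D
  proof -
    define y where "y = map (\<lambda>G. hom_K K G D) Fs'"
    have ly: "look y G = hom_K K G D" if "G \<in> set Fs'" for G
      unfolding look_def y_def map_of_zip_map using that by simp
    have mm: "map (\<lambda>F. prod_list (map (look y) (cinst F))) Fs = map (\<lambda>F. hom_K K F D) Fs"
    proof (rule map_cong[OF refl])
      fix F assume F: "F \<in> set Fs"
      have m: "map (look y) (cinst F) = map (\<lambda>G. hom_K K G D) (cinst F)"
        using ly setFs' F by (intro map_cong) auto
      have "is_instance sig ar F" using FsI F by blast
      then show "prod_list (map (look y) (cinst F)) = hom_K K F D"
        unfolding m using hom_cinst[OF assms(1), of F K D] by simp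
    qed
    have "length y = k'" unfolding y_def k'_def by simp
    moreover have "set y \<subseteq> {0,1}" if "K = KB" unfolding y_def hom_K_def that by auto
    ultimately have "y \<in> X' \<longleftrightarrow> map (\<lambda>F. prod_list (map (look y) (cinst F))) Fs \<in> X"
      unfolding X'_def by blast
    then have "y \<in> X' \<longleftrightarrow> map (\<lambda>F. hom_K K F D) Fs \<in> X" unfolding mm .
    then show ?thesis using FsC D unfolding y_def by blast
  qed
  have "left_query_alg sig ar K C k' Fs' X'"
    unfolding left_query_alg_def
    using inst' key dist' unfolding k'_def X'_def by auto
  then show "\<exists>k>0. \<exists>Fs X. left_query_alg sig ar K C k Fs X \<and> (\<forall>F\<in>set Fs. connected_inst F)"
    using k'pos conn' by blast
qed

end
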